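(* Let $\langle M,\mathsf{S}\rangle$ be a sum structure. Then for all $x\in M$ and $X\subseteq M$: $x\,\mathsf{S}\,X$ if and only if $x\,\mathsf{S}_{\sqsubseteq_{\mathsf{S}}}\,X$.
   Context: For a set $M$ and a relation $\mathsf{S}\subseteq M\times\mathcal{P}(M)$ define: $x\sqsubseteq_{\mathsf{S}} y$ iff there is $X\subseteq M$ with $y\,\mathsf{S}\,X$ and $x\in X$; $\mathrm{I}(x)=\{y\in M\mid y\sqsubseteq_{\mathsf{S}} x\}$ and for $A\subseteq M$, $\mathrm{I}(A)=\bigcup_{a\in A}\mathrm{I}(a)$; $x$ s-overlaps $y$ iff there are $X,Y\subseteq M$ with $x\,\mathsf{S}\,X$, $y\,\mathsf{S}\,Y$, $X\cap Y\neq\emptyset$; a set $A\subseteq M$ is pre-dense in $B\subseteq M$ iff for every $b\in B$ there is $a\in A$ such that $a$ s-overlaps $b$. Overlap w.r.t. $\sqsubseteq_{\mathsf{S}}$: $x\circ y$ iff there is $z\in M$ with $z\sqsubseteq_{\mathsf{S}} x$ and $z\sqsubseteq_{\mathsf{S}} y$. The induced sum: $x\,\mathsf{S}_{\sqsubseteq_{\mathsf{S}}}\,X$ iff every $y\in X$ satisfies $y\sqsubseteq_{\mathsf{S}} x$, and for every $z\in M$ with $z\sqsubseteq_{\mathsf{S}} x$ there is $y\in X$ with $y\circ z$. A sum structure is a pair $\langle M,\mathsf{S}\rangle$ satisfying: (S1) for every non-empty $X\subseteq M$ there is $x\in M$ with $x\,\mathsf{S}\,X$; (S2) $x\,\mathsf{S}\,X\wedge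 y\,\mathsf{S}\,X\to x=y$; (S3) $x\,\mathsf{S}\,X\wedge y\,\mathsf{S}\,Y\wedge x\in Y\to y\,\mathsf{S}\,(X\cup Y)$; (S4) if $x\,\mathsf{S}\,X$, $x\,\mathsf{S}\,Y$ and $y\in Y$, then there are $z\in X$ and $Z,U\subseteq M$ with $z\,\mathsf{S}\,Z$, $y\,\mathsf{S}\,U$ and $Z\cap U\neq\emptyset$; (S5) for all $x\in M$ and $X\subseteq M$: if $X$ is pre-dense in $\mathrm{I}(x)$ then $x\,\mathsf{S}\,(\mathrm{I}(x)\cap\mathrm{I}(X))$. *)

theory Defs
  imports Main
begin

(* A relation S \<subseteq> M \<times> P(M) is represented as a predicate S :: 'a \<Rightarrow> 'a set \<Rightarrow> bool;
   only pairs with x \<in> M and X \<subseteq> M are considered (enforced by sum_structure). *)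

definition sle :: "'a set \<Rightarrow> ('a \<Rightarrow> 'a set \<Rightarrow> bool) \<Rightarrow> 'a \<Rightarrow> 'a \<Rightarrow> bool" where
  "sle M S x y \<longleftrightarrow> (\<exists>X. X \<subseteq> M \<and> S y X \<and> x \<in> X)"

definition Ipt :: "'a set \<Rightarrow> ('a \<Rightarrow> 'a set \<Rightarrow> bool) \<Rightarrow> 'a \<Rightarrow> 'a set" where
  "Ipt M S x = {y \<in> M. sle M S y x}"

definition Iset :: "'a set \<Rightarrow> ('a \<Rightarrow> 'a set \<Rightarrow> bool) \<Rightarrow> 'a set \<Rightarrow> 'a set" where
  "Iset M S A = (\<Union>a\<in>A. Ipt M S a)"

definition soverlaps :: "'a set \<Rightarrow> ('a \<Rightarrow> 'a set \<Rightarrow> bool) \<Rightarrow> 'a \<Rightarrow> 'a \<Rightarrow> bool" where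
  "soverlaps M S x y \<longleftrightarrow> (\<exists>X Y. X \<subseteq> M \<and> Y \<subseteq> M \<and> S x X \<and> S y Y \<and> X \<inter> Y \<noteq> {})"

definition predense :: "'a set \<Rightarrow> ('a \<Rightarrow> 'a set \<Rightarrow> bool) \<Rightarrow> 'a set \<Rightarrow> 'a set \<Rightarrow> bool" where
  "predense M S A B \<longleftrightarrow> (\<forall>b\<in>B. \<exists>a\<in>A. soverlaps M S a b)"

definition ovl :: "'a set \<Rightarrow> ('a \<Rightarrow> 'a set \<Rightarrow> bool) \<Rightarrow> 'a \<Rightarrow> 'a \<Rightarrow> bool" where
  "ovl M S x y \<longleftrightarrow> (\<exists>z\<in>M. sle M S z x \<and> sle M S z y)"

definition induced_sum :: "'a set \<Rightarrow> ('a \<Rightarrow> 'a set \<Rightarrow> bool) \<Rightarrow> 'a \<Rightarrow> 'a set \<Rightarrow> bool" where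
  "induced_sum M S x X \<longleftrightarrow>
     (\<forall>y\<in>X. sle M S y x) \<and> (\<forall>z\<in>M. sle M S z x \<longrightarrow> (\<exists>y\<in>X. ovl M S y z))"

definition sum_structure :: "'a set \<Rightarrow> ('a \<Rightarrow> 'a set \<Rightarrow> bool) \<Rightarrow> bool" where
  "sum_structure M S \<longleftrightarrow>
     (\<forall>x X. S x X \<longrightarrow> x \<in> M \<and> X \<subseteq> M) \<and>
     (\<forall>X. X \<subseteq> M \<and> X \<noteq> {} \<longrightarrow> (\<exists>x\<in>M. S x X)) \<and>
     (\<forall>x y X. S x X \<and> S y X \<longrightarrow> x = y) \<and>
     (\<forall>x y X Y. S x X \<and> S y Y \<and> x \<in> Y \<longrightarrow> S y (X \<union> Y)) \<and>
     (\<forall>x y X Y. S x X \<and> S x Y \<and> y \<in> Y \<longrightarrow>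
        (\<exists>z\<in>X. \<exists>Z U. Z \<subseteq> M \<and> U \<subseteq> M \<and> S z Z \<and> S y U \<and> Z \<inter> U \<noteq> {})) \<and>
     (\<forall>x\<in>M. \<forall>X. X \<subseteq> M \<and> predense M S X (Ipt M S x) \<longrightarrow>
        S x (Ipt M S x \<inter> Iset M S X))"

end

theory Submission
  imports Defs
begin

lemma ssM: assumes "sum_structure M S" "S x X" shows "x \<in> M \<and> X \<subseteq> M"
  using assms unfolding sum_structure_def by metis
lemma ss1: assumes "sum_structure M S" "X \<subseteq> M" "X \<noteq> {}" shows "\<exists>x\<in>M. S x X"
  using assms unfolding sum_structure_def by metis
lemma ss2: assumes "sum_structure M S" "S x X" "S y X" shows "x = y"
  using assms unfolding sum_structure_def by metis
lemma ss3: assumes "sum_structure M S" "S x X" "S y Y" "x \<in> Y" shows "S y (X \<union> Y)"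
  using assms unfolding sum_structure_def by metis
lemma ss4: assumes "sum_structure M S" "S x X" "S x Y" "y \<in> Y"
  shows "\<exists>z\<in>X. \<exists>Z U. Z \<subseteq> M \<and> U \<subseteq> M \<and> S z Z \<and> S y U \<and> Z \<inter> U \<noteq> {}"
proof -
  have h: "\<forall>x y X Y. S x X \<and> S x Y \<and> y \<in> Y \<longrightarrow>
        (\<exists>z\<in>X. \<exists>Z U. Z \<subseteq> M \<and> U \<subseteq> M \<and> S z Z \<and> S y U \<and> Z \<inter> U \<noteq> {})"
    using assms(1) unfolding sum_structure_def by (elim conjE)
  show ?thesis using h[rule_format, OF conjI[OF assms(2) conjI[OF assms(3,4)]]] .
qed
lemma ss5: assumes "sum_structure M S" "x\<in>M" "X \<subseteq> M" "predense M S X (Ipt M S x)"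
  shows "S x (Ipt M S x \<inter> Iset M S X)"
proof -
  have h: "\<forall>x\<in>M. \<forall>X. X \<subseteq> M \<and> predense M S X (Ipt M S x) \<longrightarrow>
        S x (Ipt M S x \<inter> Iset M S X)"
    using assms(1) unfolding sum_structure_def by (elim conjE)
  show ?thesis using h[rule_format, OF assms(2) conjI[OF assms(3,4)]] .
qed

lemma sle_trans:
  assumes "sum_structure M S" "sle M S a b" "sle M S b c"
  shows "sle M S a c"
proof -
  from assms(2) obtain B where B: "S b B" "a \<in> B" unfolding sle_def by blast
  from assms(3) obtain C where C: "S c C" "b \<in> C" unfolding sle_def by blast
  have "S c (B \<union> C)" using ss3[OF assms(1) B(1) C(1) C(2)] .
  then show ?thesis unfolding sle_def using B(2) ssM[OF assms(1)] by blast
qed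

lemma Ipt_mono:
  assumes "sum_structure M S" "sle M S x w"
  shows "Ipt M S x \<subseteq> Ipt M S w"
  using sle_trans[OF assms(1) _ assms(2)] unfolding Ipt_def by blast

lemma refl_sle:
  assumes ss: "sum_structure M S" and x: "x \<in> M"
  shows "S x {x}"
proof -
  obtain w where w: "w \<in> M" "S w {x}" using ss1[OF ss, of "{x}"] x by blast
  have xw: "sle M S x w" unfolding sle_def using w x by blast
  have pd: "predense M S {x} (Ipt M S w)"
    unfolding predense_def
  proof
    fix b assume "b \<in> Ipt M S w"
    then obtain B where B: "S w B" "b \<in> B" unfolding Ipt_def sle_def by blast
    from ss4[OF ss w(2) B] show "\<exists>a\<in>{x}. soverlaps M S a b"
      unfolding soverlaps_def by blast
  qed
  have I: "Iset M S {x} = Ipt M S x" unfolding Iset_def by simp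
  have sub: "Ipt M S x \<subseteq> Ipt M S w" using Ipt_mono[OF ss xw] .
  have "S w (Ipt M S w \<inter> Iset M S {x})" using ss5[OF ss w(1) _ pd] x by blast
  hence Sw: "S w (Ipt M S x)" using I sub by (simp add: Int_absorb1)
  have pd2: "predense M S {x} (Ipt M S x)" using pd sub unfolding predense_def by blast
  have "S x (Ipt M S x \<inter> Iset M S {x})" using ss5[OF ss x _ pd2] x by blast
  hence Sx: "S x (Ipt M S x)" using I by simp
  have "x = w" using ss2[OF ss Sx Sw] .
  thus ?thesis using w by simp
qed

lemma sle_refl:
  assumes ss: "sum_structure M S" and x: "x \<in> M"
  shows "sle M S x x"
  using refl_sle[OF ss x] x unfolding sle_def by blast

lemma Iset_sub:
  assumes ss: "sum_structure M S" and "\<forall>y\<in>X. sle M S y x"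
  shows "Iset M S X \<subseteq> Ipt M S x"
  using Ipt_mono[OF ss] assms(2) unfolding Iset_def by blast

lemma sum_is_Iset:
  assumes ss: "sum_structure M S" and v: "v \<in> M" and X: "X \<subseteq> M"
    and le: "\<forall>y\<in>X. sle M S y v"
    and pd: "predense M S X (Ipt M S v)"
  shows "S v (Iset M S X)"
proof -
  have "S v (Ipt M S v \<inter> Iset M S X)" using ss5[OF ss v X pd] .
  thus ?thesis using Iset_sub[OF ss le] by (simp add: Int_absorb1)
qed

theorem theorem3p12:
  fixes M :: "'a set" and S :: "'a \<Rightarrow> 'a set \<Rightarrow> bool"
  assumes "sum_structure M S"
  shows "\<forall>x\<in>M. \<forall>X. X \<subseteq> M \<longrightarrow> (S x X \<longleftrightarrow> induced_sum M S x X)"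
proof (intro ballI allI impI iffI)
  note ss = assms
  fix x X assume x: "x \<in> M" and X: "X \<subseteq> M"
  {
    assume Sx: "S x X"
    show "induced_sum M S x X"
      unfolding induced_sum_def
    proof (intro conjI ballI impI)
      fix y assume "y \<in> X" thus "sle M S y x" unfolding sle_def using Sx X by blast
    next
      fix z assume "z \<in> M" "sle M S z x"
      then obtain B where B: "S x B" "z \<in> B" unfolding sle_def by blast
      from ss4[OF ss Sx B] obtain y Z U u where
        "y \<in> X" "Z \<subseteq> M" "U \<subseteq> M" "S y Z" "S z U" "u \<in> Z" "u \<in> U" by blast
      thus "\<exists>y\<in>X. ovl M S y z" unfolding ovl_def sle_def by blast
    qed
  }
  {
    assume ind: "induced_sum M S x X"
    have le: "\<forall>y\<in>X. sle M S y x" and cov: "\<forall>z\<in>M. sle M S z x \<longrightarrow> (\<exists>y\<in>X. ovl M S y z)"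
      using ind unfolding induced_sum_def by auto
    have ne: "X \<noteq> {}" using cov sle_refl[OF ss x] x by blast
    have pd: "predense M S X (Ipt M S x)"
      unfolding predense_def
    proof
      fix b assume "b \<in> Ipt M S x"
      hence "b \<in> M" "sle M S b x" unfolding Ipt_def by auto
      then obtain y u where y: "y \<in> X" "u \<in> M" "sle M S u y" "sle M S u b"
        using cov unfolding ovl_def by blast
      thus "\<exists>a\<in>X. soverlaps M S a b" unfolding soverlaps_def sle_def by blast
    qed
    have Sx: "S x (Iset M S X)" using sum_is_Iset[OF ss x X le pd] .
    obtain v where v: "v \<in> M" "S v X" using ss1[OF ss X ne] by blast
    have lev: "\<forall>y\<in>X. sle M S y v" unfolding sle_def using v X by blast
    have pdv: "predense M S X (Ipt M S v)"
      unfolding predense_def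
    proof
      fix b assume "b \<in> Ipt M S v"
      then obtain B where B: "S v B" "b \<in> B" unfolding Ipt_def sle_def by blast
      from ss4[OF ss v(2) B] show "\<exists>a\<in>X. soverlaps M S a b"
        unfolding soverlaps_def by blast
    qed
    have Sv: "S v (Iset M S X)" using sum_is_Iset[OF ss v(1) X lev pdv] .
    have "x = v" using ss2[OF ss Sx Sv] .
    thus "S x X" using v by simp
  }
qed

end
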